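(* Let $H=\sum_{\lambda\in E}h_\lambda$ be a local Hamiltonian with finite interaction hypergraph $(V,E)$ and $\beta\in\mathbb R$. Let $G\subset E$ and let $G=G_1\cup\dots\cup G_m$ be its decomposition into connected components (pairwise non-overlapping animals). Define $\eta(G'):=\sum_{w\in G'^\ast:\ G'\subset w}f(w)$ for $G'\subset E$, and $$\rho(G):=e^{-\beta H_{(\bar G)^c}}\prod_{j=1}^m\eta(G_j).$$ Then $$\rho(G)=\sum_{w\in((\partial G)^c)^\ast:\ G\subset w}f(w).$$
   Context: $V$ finite, $\mathcal H=\bigotimes_{x\in V}\mathcal H_x$ finite-dimensional; $H=\sum_{\lambda\in E}h_\lambda$, $h_\lambda$ Hermitian with support $\lambda\subset V$; for $K\subset E$, $H_K=\sum_{\lambda\in K}h_\lambda$. Edges overlap if they intersect; an edge set is connected (an animal) if any two edges are joined by a chain of consecutively intersecting edges within it; connected components are maximal connected subsets. For $G\subset E$: complement $G^c:=E\setminus G$; extension $\bar G:=\{\lambda\in E:\exists\lambda'\in G,\ \lambda\cap\lambda'\neq\emptyset\}$; boundary $\partial G:=\bar G\setminus G$. Words: $K^\ast=\bigcup_{l\ge0}K^l$ for $K\subset E$, $|w|$ the length, $G\subset w$ means every element of $G$ occurs in $w$, $h(w)=h_{w_1}\cdots h_{w_{|w|}}$ (empty word gives $\mathbb 1$), $f(w):=\frac{(-\beta)^{|w|}}{|w|!}h(w)$. All series converge absolutely; the factors $\eta(G_j)$ commute. *)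

theory Defs
  imports "HOL-Analysis.Analysis"
begin

text \<open>Hilbert space: the tensor product of the spaces with orthonormal bases S x (x in V).
  Its orthonormal product basis is the set of configurations PiE V S. Operators are
  represented by their matrices w.r.t. this basis; only entries indexed by configurations matter.\<close>

type_synonym ('v, 'a) op = "('v \<Rightarrow> 'a) \<Rightarrow> ('v \<Rightarrow> 'a) \<Rightarrow> complex"

definition confs :: "'v set \<Rightarrow> ('v \<Rightarrow> 'a set) \<Rightarrow> ('v \<Rightarrow> 'a) set" where
  "confs V S = PiE V S"

definition mmul :: "('v \<Rightarrow> 'a) set \<Rightarrow> ('v,'a) op \<Rightarrow> ('v,'a) op \<Rightarrow> ('v,'a) op" where
  "mmul C A B = (\<lambda>\<sigma> \<tau>. \<Sum>\<rho>\<in>C. A \<sigma> \<rho> * B \<rho> \<tau>)"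

definition mone :: "('v,'a) op" where
  "mone = (\<lambda>\<sigma> \<tau>. if \<sigma> = \<tau> then 1 else 0)"

definition mscale :: "complex \<Rightarrow> ('v,'a) op \<Rightarrow> ('v,'a) op" where
  "mscale c A = (\<lambda>\<sigma> \<tau>. c * A \<sigma> \<tau>)"

fun mprod_list :: "('v \<Rightarrow> 'a) set \<Rightarrow> ('v,'a) op list \<Rightarrow> ('v,'a) op" where
  "mprod_list C [] = mone"
| "mprod_list C (A # As) = mmul C A (mprod_list C As)"

definition mpow :: "('v \<Rightarrow> 'a) set \<Rightarrow> ('v,'a) op \<Rightarrow> nat \<Rightarrow> ('v,'a) op" where
  "mpow C A n = mprod_list C (replicate n A)"

definition mexp :: "('v \<Rightarrow> 'a) set \<Rightarrow> ('v,'a) op \<Rightarrow> ('v,'a) op" where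
  "mexp C A = (\<lambda>\<sigma> \<tau>. \<Sum>n. mpow C A n \<sigma> \<tau> / of_nat (fact n))"

definition hermitian_op :: "('v \<Rightarrow> 'a) set \<Rightarrow> ('v,'a) op \<Rightarrow> bool" where
  "hermitian_op C A \<longleftrightarrow> (\<forall>\<sigma>\<in>C. \<forall>\<tau>\<in>C. A \<sigma> \<tau> = cnj (A \<tau> \<sigma>))"

text \<open>A is supported on lam: A = a \<otimes> 1 with a acting on the factors indexed by lam.\<close>
definition supported_on :: "'v set \<Rightarrow> ('v \<Rightarrow> 'a set) \<Rightarrow> 'v set \<Rightarrow> ('v,'a) op \<Rightarrow> bool" where
  "supported_on V S lam A \<longleftrightarrow>
     (\<exists>a :: ('v \<Rightarrow> 'a) \<Rightarrow> ('v \<Rightarrow> 'a) \<Rightarrow> complex.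
        \<forall>\<sigma>\<in>confs V S. \<forall>\<tau>\<in>confs V S.
          A \<sigma> \<tau> = (if (\<forall>x\<in>V - lam. \<sigma> x = \<tau> x)
                     then a (restrict \<sigma> lam) (restrict \<tau> lam) else 0))"

definition HK :: "('e \<Rightarrow> ('v,'a) op) \<Rightarrow> 'e set \<Rightarrow> ('v,'a) op" where
  "HK h K = (\<lambda>\<sigma> \<tau>. \<Sum>lam\<in>K. h lam \<sigma> \<tau>)"

definition hword :: "('v \<Rightarrow> 'a) set \<Rightarrow> ('e \<Rightarrow> ('v,'a) op) \<Rightarrow> 'e list \<Rightarrow> ('v,'a) op" where
  "hword C h w = mprod_list C (map h w)"

definition fword :: "('v \<Rightarrow> 'a) set \<Rightarrow> real \<Rightarrow> ('e \<Rightarrow> ('v,'a) op) \<Rightarrow> 'e list \<Rightarrow> ('v,'a) op" where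
  "fword C \<beta> h w = mscale (complex_of_real ((-\<beta>) ^ length w / fact (length w))) (hword C h w)"

definition words_cover :: "'e set \<Rightarrow> 'e set \<Rightarrow> 'e list set" where
  "words_cover K G = {w. set w \<subseteq> K \<and> G \<subseteq> set w}"

definition wsum :: "('v \<Rightarrow> 'a) set \<Rightarrow> real \<Rightarrow> ('e \<Rightarrow> ('v,'a) op) \<Rightarrow> 'e list set \<Rightarrow> ('v,'a) op" where
  "wsum C \<beta> h W = (\<lambda>\<sigma> \<tau>. infsum (\<lambda>w. fword C \<beta> h w \<sigma> \<tau>) W)"

definition eta :: "('v \<Rightarrow> 'a) set \<Rightarrow> real \<Rightarrow> ('e \<Rightarrow> ('v,'a) op) \<Rightarrow> 'e set \<Rightarrow> ('v,'a) op" where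
  "eta C \<beta> h G' = wsum C \<beta> h (words_cover G' G')"

definition overlap :: "'v set \<Rightarrow> 'v set \<Rightarrow> bool" where
  "overlap l m \<longleftrightarrow> l \<inter> m \<noteq> {}"

definition edge_connected :: "'v set set \<Rightarrow> bool" where
  "edge_connected K \<longleftrightarrow>
     (\<forall>l\<in>K. \<forall>m\<in>K. (l, m) \<in> ({(a, b). a \<in> K \<and> b \<in> K \<and> overlap a b})\<^sup>*)"

definition components :: "'v set set \<Rightarrow> 'v set set set" where
  "components G = {K. K \<noteq> {} \<and> K \<subseteq> G \<and> edge_connected K \<and>
      (\<forall>K'. K \<subseteq> K' \<and> K' \<subseteq> G \<and> edge_connected K' \<longrightarrow> K' = K)}"

definition extension :: "'v set set \<Rightarrow> 'v set set \<Rightarrow> 'v set set" where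
  "extension E G = {l\<in>E. \<exists>l'\<in>G. l \<inter> l' \<noteq> {}}"

definition boundary :: "'v set set \<Rightarrow> 'v set set \<Rightarrow> 'v set set" where
  "boundary E G = extension E G - G"

end

theory Submission
  imports Defs
begin

definition ceq :: "('v \<Rightarrow> 'a) set \<Rightarrow> ('v,'a) op \<Rightarrow> ('v,'a) op \<Rightarrow> bool" where
  "ceq C A B \<longleftrightarrow> (\<forall>\<sigma>\<in>C. \<forall>\<tau>\<in>C. A \<sigma> \<tau> = B \<sigma> \<tau>)"

lemma ceq_refl: "ceq C A A" by (simp add: ceq_def)
lemma ceq_sym: "ceq C A B \<Longrightarrow> ceq C B A" by (simp add: ceq_def)
lemma ceq_trans[trans]: "ceq C A B \<Longrightarrow> ceq C B D \<Longrightarrow> ceq C A D" by (simp add: ceq_def)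

lemma mmul_cong: "ceq C A A' \<Longrightarrow> ceq C B B' \<Longrightarrow> ceq C (mmul C A B) (mmul C A' B')"
  unfolding ceq_def mmul_def by auto

lemma mmul_assoc: "finite C \<Longrightarrow> mmul C (mmul C A B) D = mmul C A (mmul C B D)"
  unfolding mmul_def
  by (auto simp: sum_distrib_left sum_distrib_right mult.assoc intro!: ext sum.swap)

lemma mone_left: "finite C \<Longrightarrow> \<sigma> \<in> C \<Longrightarrow> mmul C mone A \<sigma> \<tau> = A \<sigma> \<tau>"
  unfolding mmul_def mone_def
  by (subst sum.cong[where B=C and h="\<lambda>\<rho>. if \<rho> = \<sigma> then A \<sigma> \<tau> else 0"]) auto

lemma mone_right: "finite C \<Longrightarrow> \<tau> \<in> C \<Longrightarrow> mmul C A mone \<sigma> \<tau> = A \<sigma> \<tau>"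
  unfolding mmul_def mone_def
  by (subst sum.cong[where B=C and h="\<lambda>\<rho>. if \<rho> = \<tau> then A \<sigma> \<tau> else 0"]) auto

lemma ceq_mone_left: "finite C \<Longrightarrow> ceq C (mmul C mone A) A" by (simp add: ceq_def mone_left)
lemma ceq_mone_right: "finite C \<Longrightarrow> ceq C (mmul C A mone) A" by (simp add: ceq_def mone_right)

lemma hword_Nil[simp]: "hword C h [] = mone" by (simp add: hword_def)
lemma hword_Cons[simp]: "hword C h (x # w) = mmul C (h x) (hword C h w)" by (simp add: hword_def)

lemma hword_append_pt: "finite C \<Longrightarrow> \<sigma> \<in> C \<Longrightarrow>
   hword C h (u @ v) \<sigma> \<tau> = mmul C (hword C h u) (hword C h v) \<sigma> \<tau>"
proof (induction u arbitrary: \<sigma>)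
  case Nil then show ?case by (simp add: mone_left)
next
  case (Cons x u)
  have "hword C h ((x # u) @ v) \<sigma> \<tau> = mmul C (h x) (hword C h (u @ v)) \<sigma> \<tau>" by simp
  also have "\<dots> = mmul C (h x) (mmul C (hword C h u) (hword C h v)) \<sigma> \<tau>"
    using Cons by (auto simp: mmul_def[of C "h x"] intro!: sum.cong)
  also have "\<dots> = mmul C (hword C h (x # u)) (hword C h v) \<sigma> \<tau>"
    using Cons(2) by (simp add: mmul_assoc)
  finally show ?case .
qed

lemma hword_append: "finite C \<Longrightarrow> ceq C (hword C h (u @ v)) (mmul C (hword C h u) (hword C h v))"
  by (simp add: ceq_def hword_append_pt)

definition commC :: "('v \<Rightarrow> 'a) set \<Rightarrow> ('v,'a) op \<Rightarrow> ('v,'a) op \<Rightarrow> bool" where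
  "commC C A B \<longleftrightarrow> ceq C (mmul C A B) (mmul C B A)"

lemma comm_letter_word:
  assumes "finite C" "\<And>y. y \<in> set v \<Longrightarrow> commC C X (h y)"
  shows "commC C X (hword C h v)"
  using assms(2)
proof (induction v)
  case Nil then show ?case using assms(1)
    by (simp add: commC_def) (meson ceq_mone_left ceq_mone_right ceq_sym ceq_trans)
next
  case (Cons y v)
  have IH: "commC C X (hword C h v)" using Cons by simp
  have c: "commC C X (h y)" using Cons by simp
  have "ceq C (mmul C X (mmul C (h y) (hword C h v))) (mmul C (mmul C X (h y)) (hword C h v))"
    by (simp add: assms(1) mmul_assoc ceq_refl)
  also have "ceq C \<dots> (mmul C (mmul C (h y) X) (hword C h v))"
    using c by (simp add: commC_def mmul_cong ceq_refl)
  also have "mmul C (mmul C (h y) X) (hword C h v) = mmul C (h y) (mmul C X (hword C h v))"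
    by (simp add: assms(1) mmul_assoc)
  also have "ceq C \<dots> (mmul C (h y) (mmul C (hword C h v) X))"
    using IH by (simp add: commC_def mmul_cong ceq_refl)
  also have "mmul C (h y) (mmul C (hword C h v) X) = mmul C (mmul C (h y) (hword C h v)) X"
    by (simp add: assms(1) mmul_assoc)
  finally show ?case by (simp add: commC_def)
qed

lemma hword_filter_split:
  assumes "finite C"
    and "\<And>x y. x \<in> set w \<Longrightarrow> y \<in> set w \<Longrightarrow> P x \<Longrightarrow> \<not> P y \<Longrightarrow> commC C (h y) (h x)"
  shows "ceq C (hword C h w) (mmul C (hword C h (filter P w)) (hword C h (filter (\<lambda>x. \<not> P x) w)))"
  using assms(2)
proof (induction w)
  case Nil then show ?case using assms(1) by (simp add: ceq_sym ceq_mone_left)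
next
  case (Cons x w)
  have IH: "ceq C (hword C h w) (mmul C (hword C h (filter P w)) (hword C h (filter (\<lambda>x. \<not> P x) w)))"
    using Cons by simp
  have s1: "ceq C (hword C h (x # w)) (mmul C (h x) (mmul C (hword C h (filter P w)) (hword C h (filter (\<lambda>x. \<not> P x) w))))"
    using IH by (simp add: mmul_cong ceq_refl)
  show ?case
  proof (cases "P x")
    case True
    have "mmul C (h x) (mmul C (hword C h (filter P w)) (hword C h (filter (\<lambda>x. \<not> P x) w)))
       = mmul C (hword C h (filter P (x # w))) (hword C h (filter (\<lambda>x. \<not> P x) (x # w)))"
      using True assms(1) by (simp add: mmul_assoc)
    then show ?thesis using s1 by simp
  next
    case False
    have cx: "commC C (h x) (hword C h (filter P w))"
      by (rule comm_letter_word[OF assms(1)]) (use Cons.prems False in auto)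
    have "ceq C (mmul C (h x) (mmul C (hword C h (filter P w)) (hword C h (filter (\<lambda>x. \<not> P x) w))))
           (mmul C (mmul C (h x) (hword C h (filter P w))) (hword C h (filter (\<lambda>x. \<not> P x) w)))"
      using assms(1) by (simp add: mmul_assoc ceq_refl)
    also have "ceq C \<dots> (mmul C (mmul C (hword C h (filter P w)) (h x)) (hword C h (filter (\<lambda>x. \<not> P x) w)))"
      using cx by (simp add: commC_def mmul_cong ceq_refl)
    also have "\<dots> = mmul C (hword C h (filter P (x # w))) (hword C h (filter (\<lambda>x. \<not> P x) (x # w)))"
      using False assms(1) by (simp add: mmul_assoc)
    finally show ?thesis using s1 ceq_trans by blast
  qed
qed

lemma hword_bound:
  assumes "finite C" "0 \<le> B" "\<And>l a b. l \<in> K \<Longrightarrow> a \<in> C \<Longrightarrow> b \<in> C \<Longrightarrow> norm (h l a b) \<le> B"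
  shows "\<sigma> \<in> C \<Longrightarrow> set w \<subseteq> K \<Longrightarrow> norm (hword C h w \<sigma> \<tau>) \<le> (real (card C) * B) ^ length w"
proof (induction w arbitrary: \<sigma>)
  case Nil then show ?case by (simp add: mone_def)
next
  case (Cons x w)
  have "norm (hword C h (x # w) \<sigma> \<tau>) = norm (\<Sum>\<rho>\<in>C. h x \<sigma> \<rho> * hword C h w \<rho> \<tau>)"
    by (simp add: mmul_def)
  also have "\<dots> \<le> (\<Sum>\<rho>\<in>C. norm (h x \<sigma> \<rho>) * norm (hword C h w \<rho> \<tau>))"
    by (rule order_trans[OF norm_sum]) (simp add: norm_mult)
  also have "\<dots> \<le> (\<Sum>\<rho>\<in>C. B * (real (card C) * B) ^ length w)"
  proof (rule sum_mono)
    fix \<rho> assume r: "\<rho> \<in> C"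
    show "norm (h x \<sigma> \<rho>) * norm (hword C h w \<rho> \<tau>) \<le> B * (real (card C) * B) ^ length w"
      by (rule mult_mono) (use Cons r assms in auto)
  qed
  also have "\<dots> = (real (card C) * B) ^ length (x # w)" by simp
  finally show ?case .
qed

lemma fword_apply: "fword C \<beta> h w \<sigma> \<tau> = complex_of_real ((- \<beta>) ^ length w / fact (length w)) * hword C h w \<sigma> \<tau>"
  by (simp add: fword_def mscale_def)

lemma fword_norm: "norm (fword C \<beta> h w \<sigma> \<tau>) = \<bar>\<beta>\<bar> ^ length w / fact (length w) * norm (hword C h w \<sigma> \<tau>)"
  by (simp add: fword_apply norm_mult abs_divide power_abs norm_divide norm_power)

lemma words_g_summable:
  fixes a :: real
  assumes "finite K" "0 \<le> a"
  shows "(\<lambda>w. a ^ length w / fact (length w)) summable_on {w. set w \<subseteq> K}"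
proof (rule nonneg_bdd_above_summable_on)
  show "\<And>x. x \<in> {w. set w \<subseteq> K} \<Longrightarrow> 0 \<le> a ^ length x / fact (length x)" using assms by simp
  define e where "e = suminf (\<lambda>n. inverse (fact n) * (real (card K) * a) ^ n)"
  show "bdd_above ((sum (\<lambda>w. a ^ length w / fact (length w))) ` {F. F \<subseteq> {w. set w \<subseteq> K} \<and> finite F})"
  proof (rule bdd_aboveI2[where M=e])
    fix F assume F: "F \<in> {F. F \<subseteq> {w. set w \<subseteq> K} \<and> finite F}"
    define N where "N = Suc (Max (insert 0 (length ` F)))"
    define L where "L n = {w. set w \<subseteq> K \<and> length w = n}" for n
    have finL: "finite (L n)" for n unfolding L_def by (rule finite_lists_length_eq[OF assms(1)])
    have sub: "F \<subseteq> (\<Union>n<N. L n)"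
    proof
      fix w assume w: "w \<in> F"
      have "length w \<le> Max (insert 0 (length ` F))" using F w by (intro Max_ge) auto
      then have "length w < N" by (simp add: N_def)
      then show "w \<in> (\<Union>n<N. L n)" using F w by (auto simp: L_def)
    qed
    have "sum (\<lambda>w. a ^ length w / fact (length w)) F \<le> sum (\<lambda>w. a ^ length w / fact (length w)) (\<Union>n<N. L n)"
      by (rule sum_mono2) (use finL sub assms in auto)
    also have "\<dots> = (\<Sum>n<N. sum (\<lambda>w. a ^ length w / fact (length w)) (L n))"
      by (rule sum.UNION_disjoint) (use finL in \<open>auto simp: L_def\<close>)
    also have "\<dots> = (\<Sum>n<N. inverse (fact n) * (real (card K) * a) ^ n)"
    proof (rule sum.cong[OF refl])
      fix n
      have "sum (\<lambda>w. a ^ length w / fact (length w)) (L n) = sum (\<lambda>w. a ^ n / fact n) (L n)"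
        by (rule sum.cong) (auto simp: L_def)
      also have "\<dots> = real (card K) ^ n * (a ^ n / fact n)"
        using card_lists_length_eq[OF assms(1), of n] by (simp add: L_def)
      finally show "sum (\<lambda>w. a ^ length w / fact (length w)) (L n) = inverse (fact n) * (real (card K) * a) ^ n"
        by (simp add: power_mult_distrib field_simps)
    qed
    also have "\<dots> \<le> e" unfolding e_def
      by (rule sum_le_suminf[OF summable_exp]) (use assms in auto)
    finally show "sum (\<lambda>w. a ^ length w / fact (length w)) F \<le> e" .
  qed
qed

lemma fword_abs_summable:
  assumes "finite C" "finite K" "0 \<le> B" "\<And>l a b. l \<in> K \<Longrightarrow> a \<in> C \<Longrightarrow> b \<in> C \<Longrightarrow> norm (h l a b) \<le> B"
    and "\<sigma> \<in> C" "W \<subseteq> {w. set w \<subseteq> K}"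
  shows "(\<lambda>w. norm (fword C \<beta> h w \<sigma> \<tau>)) summable_on W"
proof -
  define a where "a = \<bar>\<beta>\<bar> * (real (card C) * B)"
  have g: "(\<lambda>w. a ^ length w / fact (length w)) summable_on {w. set w \<subseteq> K}"
    by (rule words_g_summable) (use assms in \<open>auto simp: a_def\<close>)
  have "(\<lambda>w. norm (fword C \<beta> h w \<sigma> \<tau>)) summable_on {w. set w \<subseteq> K}"
  proof (rule summable_on_comparison_test[OF g])
    fix w assume w: "w \<in> {w. set w \<subseteq> K}"
    have "norm (fword C \<beta> h w \<sigma> \<tau>) \<le> \<bar>\<beta>\<bar> ^ length w / fact (length w) * (real (card C) * B) ^ length w"
      unfolding fword_norm
      by (rule mult_left_mono[OF hword_bound[OF assms(1,3) assms(4)]]) (use w assms in auto)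
    also have "\<dots> = a ^ length w / fact (length w)"
      using assms by (simp add: a_def power_mult_distrib)
    finally show "norm (fword C \<beta> h w \<sigma> \<tau>) \<le> a ^ length w / fact (length w)" .
  qed simp
  then show ?thesis using assms(6) summable_on_subset_banach by blast
qed

lemma mpow_Suc: "mpow C A (Suc n) = mmul C A (mpow C A n)" by (simp add: mpow_def)
lemma mpow_0: "mpow C A 0 = mone" by (simp add: mpow_def)

lemma mpow_expand:
  assumes "finite K"
  shows "mpow C (mscale c (HK h K)) n \<sigma> \<tau> = c ^ n * (\<Sum>w\<in>{w. set w \<subseteq> K \<and> length w = n}. hword C h w \<sigma> \<tau>)"
proof (induction n arbitrary: \<sigma> \<tau>)
  case 0
  have "{w. set w \<subseteq> K \<and> length w = 0} = {[]}" by auto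
  then show ?case by (simp add: mpow_0)
next
  case (Suc n)
  define L where "L n = {w. set w \<subseteq> K \<and> length w = n}" for n
  have finL: "finite (L n)" unfolding L_def by (rule finite_lists_length_eq[OF assms(1)])
  have "mpow C (mscale c (HK h K)) (Suc n) \<sigma> \<tau>
      = (\<Sum>\<rho>\<in>C. mscale c (HK h K) \<sigma> \<rho> * mpow C (mscale c (HK h K)) n \<rho> \<tau>)"
    by (simp only: mpow_Suc mmul_def)
  also have "\<dots> = (\<Sum>\<rho>\<in>C. (c * (\<Sum>l\<in>K. h l \<sigma> \<rho>)) * (c ^ n * (\<Sum>w\<in>L n. hword C h w \<rho> \<tau>)))"
    unfolding Suc.IH by (simp add: mscale_def HK_def L_def)
  also have "\<dots> = c ^ Suc n * (\<Sum>l\<in>K. \<Sum>w\<in>L n. \<Sum>\<rho>\<in>C. h l \<sigma> \<rho> * hword C h w \<rho> \<tau>)"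
  proof -
    have "(\<Sum>\<rho>\<in>C. (c * (\<Sum>l\<in>K. h l \<sigma> \<rho>)) * (c ^ n * (\<Sum>w\<in>L n. hword C h w \<rho> \<tau>)))
       = (\<Sum>\<rho>\<in>C. \<Sum>l\<in>K. \<Sum>w\<in>L n. c ^ Suc n * (h l \<sigma> \<rho> * hword C h w \<rho> \<tau>))"
      by (simp add: sum_distrib_left sum_distrib_right mult_ac) (rule sum.cong[OF refl], rule sum.swap)
    also have "\<dots> = (\<Sum>l\<in>K. \<Sum>\<rho>\<in>C. \<Sum>w\<in>L n. c ^ Suc n * (h l \<sigma> \<rho> * hword C h w \<rho> \<tau>))"
      by (rule sum.swap)
    also have "\<dots> = (\<Sum>l\<in>K. \<Sum>w\<in>L n. \<Sum>\<rho>\<in>C. c ^ Suc n * (h l \<sigma> \<rho> * hword C h w \<rho> \<tau>))"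
      by (rule sum.cong[OF refl], rule sum.swap)
    also have "\<dots> = c ^ Suc n * (\<Sum>l\<in>K. \<Sum>w\<in>L n. \<Sum>\<rho>\<in>C. h l \<sigma> \<rho> * hword C h w \<rho> \<tau>)"
      by (simp add: sum_distrib_left)
    finally show ?thesis .
  qed
  also have "\<dots> = c ^ Suc n * (\<Sum>l\<in>K. \<Sum>w\<in>L n. hword C h (l # w) \<sigma> \<tau>)"
    by (simp add: mmul_def)
  also have "(\<Sum>l\<in>K. \<Sum>w\<in>L n. hword C h (l # w) \<sigma> \<tau>) = (\<Sum>w\<in>L (Suc n). hword C h w \<sigma> \<tau>)"
  proof -
    have "L (Suc n) = (\<lambda>(xs, x). x # xs) ` (L n \<times> K)"
      unfolding L_def by (rule lists_length_Suc_eq)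
    moreover have "inj_on (\<lambda>(xs, x). x # xs) (L n \<times> K)" by (auto simp: inj_on_def)
    ultimately have "(\<Sum>w\<in>L (Suc n). hword C h w \<sigma> \<tau>) = (\<Sum>(xs, x)\<in>L n \<times> K. hword C h (x # xs) \<sigma> \<tau>)"
      by (simp del: hword_Cons add: sum.reindex o_def case_prod_unfold)
    also have "\<dots> = (\<Sum>xs\<in>L n. \<Sum>x\<in>K. hword C h (x # xs) \<sigma> \<tau>)"
      by (rule sum.cartesian_product[symmetric])
    also have "\<dots> = (\<Sum>x\<in>K. \<Sum>xs\<in>L n. hword C h (x # xs) \<sigma> \<tau>)"
      by (rule sum.swap)
    finally show ?thesis by simp
  qed
  finally show ?case by (simp add: L_def)
qed

lemma wsum_exp:
  assumes "finite C" "finite K" "0 \<le> B" "\<And>l a b. l \<in> K \<Longrightarrow> a \<in> C \<Longrightarrow> b \<in> C \<Longrightarrow> norm (h l a b) \<le> B"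
    and "\<sigma> \<in> C"
  shows "wsum C \<beta> h (words_cover K {}) \<sigma> \<tau> = mexp C (mscale (complex_of_real (-\<beta>)) (HK h K)) \<sigma> \<tau>"
proof -
  define F where "F w = fword C \<beta> h w \<sigma> \<tau>" for w
  define W where "W = {w. set w \<subseteq> K}"
  define L where "L n = {w. set w \<subseteq> K \<and> length w = n}" for n
  define Sig where "Sig = Sigma (UNIV :: nat set) L"
  have finL: "finite (L n)" for n unfolding L_def by (rule finite_lists_length_eq[OF assms(2)])
  have WC: "words_cover K {} = W" by (simp add: words_cover_def W_def)
  have img: "W = snd ` Sig"
  proof (rule set_eqI, rule iffI)
    fix w assume "w \<in> W"
    then have "(length w, w) \<in> Sig" by (simp add: W_def Sig_def L_def)
    then show "w \<in> snd ` Sig" by (metis snd_conv image_eqI)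
  next
    fix w assume "w \<in> snd ` Sig"
    then show "w \<in> W" by (auto simp: W_def Sig_def L_def)
  qed
  have inj: "inj_on snd Sig" by (auto simp: inj_on_def Sig_def L_def)
  have sF: "F summable_on W"
  proof -
    have WK: "W \<subseteq> {w. set w \<subseteq> K}" by (simp add: W_def)
    show ?thesis unfolding F_def
      by (rule Infinite_Sum.abs_summable_summable, rule fword_abs_summable[OF assms(1-4) assms(5) WK])
  qed
  have sS: "(\<lambda>(n, w). F w) summable_on Sig"
    using sF unfolding img summable_on_reindex[OF inj] by (simp add: o_def case_prod_unfold)
  have e1: "infsum F W = infsum (\<lambda>(n, w). F w) Sig"
    unfolding img infsum_reindex[OF inj] by (simp add: o_def case_prod_unfold)
  have e2: "infsum (\<lambda>n. infsum (\<lambda>w. F w) (L n)) UNIV = infsum (\<lambda>(n, w). F w) Sig"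
    using sS unfolding Sig_def by (rule infsum_Sigma'_banach)
  have s2: "(\<lambda>n. infsum (\<lambda>w. F w) (L n)) summable_on UNIV"
    using sS unfolding Sig_def by (rule summable_on_Sigma_banach)
  have gn: "infsum (\<lambda>w. F w) (L n) = mpow C (mscale (complex_of_real (-\<beta>)) (HK h K)) n \<sigma> \<tau> / of_nat (fact n)" for n
  proof -
    have "infsum (\<lambda>w. F w) (L n) = (\<Sum>w\<in>L n. complex_of_real ((- \<beta>) ^ n / fact n) * hword C h w \<sigma> \<tau>)"
      using finL by (simp add: F_def fword_apply L_def)
    also have "\<dots> = complex_of_real ((- \<beta>) ^ n / fact n) * (\<Sum>w\<in>L n. hword C h w \<sigma> \<tau>)"
      by (simp add: sum_distrib_left)
    also have "\<dots> = mpow C (mscale (complex_of_real (-\<beta>)) (HK h K)) n \<sigma> \<tau> / of_nat (fact n)"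
      by (simp add: mpow_expand[OF assms(2)] L_def)
    finally show ?thesis .
  qed
  have "(\<lambda>n. infsum (\<lambda>w. F w) (L n)) sums infsum (\<lambda>n. infsum (\<lambda>w. F w) (L n)) UNIV"
    by (rule has_sum_imp_sums) (use s2 in simp)
  moreover have "(\<lambda>n. infsum (\<lambda>w. F w) (L n)) = (\<lambda>n. mpow C (mscale (complex_of_real (-\<beta>)) (HK h K)) n \<sigma> \<tau> / of_nat (fact n))"
    using gn by (intro ext) 
  moreover have "infsum (\<lambda>n. infsum (\<lambda>w. F w) (L n)) UNIV = infsum F W"
    using e1 e2 by simp
  ultimately have "(\<lambda>n. mpow C (mscale (complex_of_real (-\<beta>)) (HK h K)) n \<sigma> \<tau> / of_nat (fact n)) sums infsum F W"
    by simp
  then show ?thesis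
    unfolding wsum_def WC mexp_def F_def by (simp add: sums_iff)
qed

lemma infsum_sum_fin:
  fixes f :: "'i \<Rightarrow> 'w \<Rightarrow> complex"
  assumes "finite I" "\<And>i. i \<in> I \<Longrightarrow> f i summable_on A"
  shows "infsum (\<lambda>x. \<Sum>i\<in>I. f i x) A = (\<Sum>i\<in>I. infsum (f i) A) \<and> (\<lambda>x. \<Sum>i\<in>I. f i x) summable_on A"
  using assms
proof (induction I rule: finite_induct)
  case empty then show ?case by simp
next
  case (insert i I)
  have si: "f i summable_on A" using insert by simp
  have IH: "infsum (\<lambda>x. \<Sum>i\<in>I. f i x) A = (\<Sum>i\<in>I. infsum (f i) A)" "(\<lambda>x. \<Sum>i\<in>I. f i x) summable_on A"
    using insert by auto
  show ?case
    using insert(1,2) infsum_add[OF si IH(2)] summable_on_add[OF si IH(2)] IH(1) by simp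
qed

lemma infsum_prod_complex:
  fixes a :: "'x \<Rightarrow> complex" and b :: "'y \<Rightarrow> complex"
  assumes sa: "(\<lambda>x. norm (a x)) summable_on A" and sb: "(\<lambda>y. norm (b y)) summable_on B"
  shows "infsum a A * infsum b B = infsum (\<lambda>(x,y). a x * b y) (A \<times> B)"
proof -
  have sab: "(\<lambda>(x,y). a x * b y) summable_on (A \<times> B)"
  proof (rule Infinite_Sum.abs_summable_summable,
         rule Infinite_Sum.abs_summable_on_Sigma_iff[of "\<lambda>(x,y). a x * b y" A "\<lambda>_. B", THEN iffD2], intro conjI ballI)
    fix x assume "x \<in> A"
    show "(\<lambda>y. norm ((\<lambda>(x,y). a x * b y) (x, y))) summable_on B"
      using summable_on_cmult_right[OF sb, of "norm (a x)"] by (simp add: norm_mult)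
  next
    have "(\<lambda>x. norm (a x) * norm (infsum (\<lambda>y. norm (b y)) B)) summable_on A"
      by (rule summable_on_cmult_left[OF sa])
    then show "(\<lambda>x. norm (infsum (\<lambda>y. norm ((\<lambda>(x,y). a x * b y) (x, y))) B)) summable_on A"
      by (simp add: norm_mult infsum_cmult_right' abs_mult)
  qed
  have "infsum a A * infsum b B = infsum (\<lambda>x. a x * infsum b B) A"
    by (simp add: infsum_cmult_left')
  also have "\<dots> = infsum (\<lambda>x. infsum (\<lambda>y. a x * b y) B) A"
    by (simp add: infsum_cmult_right')
  also have "\<dots> = infsum (\<lambda>(x,y). a x * b y) (A \<times> B)"
    using sab by (rule infsum_Sigma'_banach)
  finally show ?thesis .
qed

lemma summable_prod_complex:
  fixes a :: "'x \<Rightarrow> complex" and b :: "'y \<Rightarrow> complex"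
  assumes sa: "(\<lambda>x. norm (a x)) summable_on A" and sb: "(\<lambda>y. norm (b y)) summable_on B"
  shows "(\<lambda>(x,y). a x * b y) summable_on (A \<times> B)"
proof (rule Infinite_Sum.abs_summable_summable,
       rule Infinite_Sum.abs_summable_on_Sigma_iff[of "\<lambda>(x,y). a x * b y" A "\<lambda>_. B", THEN iffD2], intro conjI ballI)
  fix x assume "x \<in> A"
  show "(\<lambda>y. norm ((\<lambda>(x,y). a x * b y) (x, y))) summable_on B"
    using summable_on_cmult_right[OF sb, of "norm (a x)"] by (simp add: norm_mult)
next
  have "(\<lambda>x. norm (a x) * norm (infsum (\<lambda>y. norm (b y)) B)) summable_on A"
    by (rule summable_on_cmult_left[OF sa])
  then show "(\<lambda>x. norm (infsum (\<lambda>y. norm ((\<lambda>(x,y). a x * b y) (x, y))) B)) summable_on A"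
    by (simp add: norm_mult infsum_cmult_right' abs_mult)
qed

lemma coeff_shuffle:
  "of_nat ((k + m) choose k) * complex_of_real ((-\<beta>) ^ (k + m) / fact (k + m))
   = complex_of_real ((-\<beta>) ^ k / fact k) * complex_of_real ((-\<beta>) ^ m / fact m)"
proof -
  have b: "real ((k + m) choose k) = fact (k + m) / (fact k * fact m)"
    using binomial_fact[of k "k + m"] by simp
  have r: "real ((k + m) choose k) * ((-\<beta>) ^ (k + m) / fact (k + m)) = (-\<beta>) ^ k / fact k * ((-\<beta>) ^ m / fact m)"
    unfolding b by (simp add: power_add field_simps)
  show ?thesis using arg_cong[OF r, of complex_of_real] by simp
qed

lemma in_shuffles_filter: "w \<in> shuffles (filter P w) (filter (\<lambda>x. \<not> P x) w)"
proof (induction w)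
  case Nil then show ?case by simp
next
  case (Cons x w) then show ?case
    by (cases "P x") (auto intro: Cons_in_shuffles_leftI Cons_in_shuffles_rightI)
qed

lemma wsum_split:
  assumes fC: "finite C" and fK1: "finite K1" and fK2: "finite K2" and B0: "0 \<le> B"
    and Bb: "\<And>l a b. l \<in> K1 \<union> K2 \<Longrightarrow> a \<in> C \<Longrightarrow> b \<in> C \<Longrightarrow> norm (h l a b) \<le> B"
    and disj: "K1 \<inter> K2 = {}" and R1: "R1 \<subseteq> K1" and R2: "R2 \<subseteq> K2"
    and comm: "\<And>x y. x \<in> K1 \<Longrightarrow> y \<in> K2 \<Longrightarrow> commC C (h y) (h x)"
  shows "ceq C (wsum C \<beta> h (words_cover (K1 \<union> K2) (R1 \<union> R2)))
               (mmul C (wsum C \<beta> h (words_cover K1 R1)) (wsum C \<beta> h (words_cover K2 R2)))"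
  unfolding ceq_def
proof (intro ballI)
  fix \<sigma> \<tau> assume \<sigma>: "\<sigma> \<in> C" and \<tau>: "\<tau> \<in> C"
  define P where "P x = (x \<in> K1)" for x
  define W1 where "W1 = words_cover K1 R1"
  define W2 where "W2 = words_cover K2 R2"
  define W12 where "W12 = words_cover (K1 \<union> K2) (R1 \<union> R2)"
  define Sig where "Sig = Sigma (W1 \<times> W2) (\<lambda>(u, v). shuffles u v)"
  define F where "F w = fword C \<beta> h w \<sigma> \<tau>" for w
  define c where "c n = complex_of_real ((-\<beta>) ^ n / fact n)" for n
  define X where "X u v = mmul C (hword C h u) (hword C h v) \<sigma> \<tau>" for u v
  have W1sub: "W1 \<subseteq> {w. set w \<subseteq> K1}" and W2sub: "W2 \<subseteq> {w. set w \<subseteq> K2}"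
    by (auto simp: W1_def W2_def words_cover_def)
  have Bb1: "\<And>l a b. l \<in> K1 \<Longrightarrow> a \<in> C \<Longrightarrow> b \<in> C \<Longrightarrow> norm (h l a b) \<le> B" using Bb by blast
  have Bb2: "\<And>l a b. l \<in> K2 \<Longrightarrow> a \<in> C \<Longrightarrow> b \<in> C \<Longrightarrow> norm (h l a b) \<le> B" using Bb by blast
  have filt: "filter P w = u \<and> filter (\<lambda>x. \<not> P x) w = v"
    if uv: "u \<in> W1" "v \<in> W2" and w: "w \<in> shuffles u v" for u v w
  proof -
    have su: "set u \<subseteq> K1" and sv: "set v \<subseteq> K2" using uv by (auto simp: W1_def W2_def words_cover_def)
    have "filter P u = u" using su by (auto simp: P_def filter_id_conv)
    moreover have "filter P v = []" using sv disj by (auto simp: P_def filter_empty_conv)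
    ultimately have "filter P w \<in> shuffles u []"
      using filter_shuffles[of P u v] w by (metis image_eqI)
    moreover have "filter (\<lambda>x. \<not> P x) u = []" using su by (auto simp: P_def filter_empty_conv)
    moreover have "filter (\<lambda>x. \<not> P x) v = v" using sv disj by (auto simp: P_def filter_id_conv)
    ultimately show ?thesis
      using filter_shuffles[of "\<lambda>x. \<not> P x" u v] w by (metis image_eqI shuffles.simps(1) shuffles.simps(2) singletonD)
  qed
  have img: "W12 = snd ` Sig"
  proof (rule set_eqI, rule iffI)
    fix w assume w: "w \<in> W12"
    have sw: "set w \<subseteq> K1 \<union> K2" and cw: "R1 \<union> R2 \<subseteq> set w" using w by (auto simp: W12_def words_cover_def)
    have "filter P w \<in> W1" using sw cw R1 by (auto simp: W1_def words_cover_def P_def)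
    moreover have "filter (\<lambda>x. \<not> P x) w \<in> W2" using sw cw R2 disj by (auto simp: W2_def words_cover_def P_def)
    ultimately have "((filter P w, filter (\<lambda>x. \<not> P x) w), w) \<in> Sig"
      using in_shuffles_filter[of w P] by (simp add: Sig_def)
    then show "w \<in> snd ` Sig" by (metis snd_conv image_eqI)
  next
    fix w assume "w \<in> snd ` Sig"
    then obtain u v where uv: "u \<in> W1" "v \<in> W2" and w: "w \<in> shuffles u v" by (auto simp: Sig_def)
    then show "w \<in> W12" using set_shuffles[OF w] by (auto simp: W1_def W2_def W12_def words_cover_def)
  qed
  have inj: "inj_on snd Sig"
  proof (rule inj_onI)
    fix p q assume p: "p \<in> Sig" and q: "q \<in> Sig" and e: "snd p = snd q"
    obtain u v w where pe: "p = ((u, v), w)" "u \<in> W1" "v \<in> W2" "w \<in> shuffles u v" using p by (auto simp: Sig_def)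
    obtain u' v' w' where qe: "q = ((u', v'), w')" "u' \<in> W1" "v' \<in> W2" "w' \<in> shuffles u' v'" using q by (auto simp: Sig_def)
    show "p = q" using filt[OF pe(2-4)] filt[OF qe(2-4)] pe(1) qe(1) e by simp
  qed
  have sF: "F summable_on W12"
  proof -
    have sub: "W12 \<subseteq> {w. set w \<subseteq> K1 \<union> K2}" by (auto simp: W12_def words_cover_def)
    have fK: "finite (K1 \<union> K2)" using fK1 fK2 by simp
    show ?thesis unfolding F_def
      by (rule Infinite_Sum.abs_summable_summable[OF fword_abs_summable[OF fC fK B0 Bb \<sigma> sub]])
  qed
  have sS: "(\<lambda>(p, w). F w) summable_on Sig"
    using sF unfolding img summable_on_reindex[OF inj] by (simp add: o_def case_prod_unfold)
  have e1: "infsum F W12 = infsum (\<lambda>(p, w). F w) Sig"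
    unfolding img infsum_reindex[OF inj] by (simp add: o_def case_prod_unfold)
  have e2: "infsum (\<lambda>p. infsum (\<lambda>w. F w) ((\<lambda>(u, v). shuffles u v) p)) (W1 \<times> W2) = infsum (\<lambda>(p, w). F w) Sig"
    using sS unfolding Sig_def by (rule infsum_Sigma'_banach)
  have inner: "infsum (\<lambda>w. F w) (shuffles u v) = c (length u) * c (length v) * X u v"
    if uv: "u \<in> W1" "v \<in> W2" for u v
  proof -
    have su: "set u \<subseteq> K1" and sv: "set v \<subseteq> K2" using uv by (auto simp: W1_def W2_def words_cover_def)
    have Fw: "F w = c (length u + length v) * X u v" if w: "w \<in> shuffles u v" for w
    proof -
      have sw: "set w \<subseteq> K1 \<union> K2" using set_shuffles[OF w] su sv by auto
      have "ceq C (hword C h w) (mmul C (hword C h (filter P w)) (hword C h (filter (\<lambda>x. \<not> P x) w)))"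
        by (rule hword_filter_split[OF fC]) (use sw comm in \<open>auto simp: P_def\<close>)
      then have "hword C h w \<sigma> \<tau> = X u v"
        using filt[OF uv w] \<sigma> \<tau> by (simp add: ceq_def X_def)
      then show ?thesis by (simp add: F_def fword_apply c_def length_shuffles[OF w])
    qed
    have "infsum (\<lambda>w. F w) (shuffles u v) = (\<Sum>w\<in>shuffles u v. c (length u + length v) * X u v)"
      using Fw by simp
    also have "\<dots> = of_nat (card (shuffles u v)) * c (length u + length v) * X u v" by simp
    also have "card (shuffles u v) = (length u + length v) choose length u"
      by (rule card_disjoint_shuffles) (use su sv disj in auto)
    also have "of_nat ((length u + length v) choose length u) * c (length u + length v) = c (length u) * c (length v)"
      unfolding c_def by (rule coeff_shuffle)
    finally show ?thesis .
  qed
  have LHS: "infsum F W12 = infsum (\<lambda>(u, v). c (length u) * c (length v) * X u v) (W1 \<times> W2)"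
    using e1 e2[symmetric] inner by (auto intro!: infsum_cong)
  have "mmul C (wsum C \<beta> h W1) (wsum C \<beta> h W2) \<sigma> \<tau>
      = (\<Sum>\<rho>\<in>C. infsum (\<lambda>u. fword C \<beta> h u \<sigma> \<rho>) W1 * infsum (\<lambda>v. fword C \<beta> h v \<rho> \<tau>) W2)"
    by (simp add: mmul_def wsum_def)
  also have "\<dots> = (\<Sum>\<rho>\<in>C. infsum (\<lambda>(u, v). fword C \<beta> h u \<sigma> \<rho> * fword C \<beta> h v \<rho> \<tau>) (W1 \<times> W2))"
  proof (rule sum.cong[OF refl])
    fix \<rho> assume \<rho>: "\<rho> \<in> C"
    show "infsum (\<lambda>u. fword C \<beta> h u \<sigma> \<rho>) W1 * infsum (\<lambda>v. fword C \<beta> h v \<rho> \<tau>) W2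
        = infsum (\<lambda>(u, v). fword C \<beta> h u \<sigma> \<rho> * fword C \<beta> h v \<rho> \<tau>) (W1 \<times> W2)"
      by (rule infsum_prod_complex[OF fword_abs_summable[OF fC fK1 B0 Bb1 \<sigma> W1sub] fword_abs_summable[OF fC fK2 B0 Bb2 \<rho> W2sub]])
  qed
  also have "\<dots> = infsum (\<lambda>p. \<Sum>\<rho>\<in>C. (\<lambda>\<rho> (u, v). fword C \<beta> h u \<sigma> \<rho> * fword C \<beta> h v \<rho> \<tau>) \<rho> p) (W1 \<times> W2)"
  proof (rule infsum_sum_fin[OF fC, THEN conjunct1, symmetric])
    fix \<rho> assume \<rho>: "\<rho> \<in> C"
    show "(\<lambda>(u, v). fword C \<beta> h u \<sigma> \<rho> * fword C \<beta> h v \<rho> \<tau>) summable_on W1 \<times> W2"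
      by (rule summable_prod_complex[OF fword_abs_summable[OF fC fK1 B0 Bb1 \<sigma> W1sub] fword_abs_summable[OF fC fK2 B0 Bb2 \<rho> W2sub]])
  qed
  also have "\<dots> = infsum (\<lambda>(u, v). c (length u) * c (length v) * X u v) (W1 \<times> W2)"
  proof (rule infsum_cong)
    fix p assume "p \<in> W1 \<times> W2"
    obtain u v where p: "p = (u, v)" by (cases p)
    have "(\<Sum>\<rho>\<in>C. fword C \<beta> h u \<sigma> \<rho> * fword C \<beta> h v \<rho> \<tau>)
        = (\<Sum>\<rho>\<in>C. c (length u) * c (length v) * (hword C h u \<sigma> \<rho> * hword C h v \<rho> \<tau>))"
      by (simp add: fword_apply c_def mult_ac)
    also have "\<dots> = c (length u) * c (length v) * X u v"
      by (simp add: X_def mmul_def sum_distrib_left)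
    finally show "(\<Sum>\<rho>\<in>C. (\<lambda>\<rho> (u, v). fword C \<beta> h u \<sigma> \<rho> * fword C \<beta> h v \<rho> \<tau>) \<rho> p)
        = (\<lambda>(u, v). c (length u) * c (length v) * X u v) p" by (simp add: p)
  qed
  finally show "wsum C \<beta> h (words_cover (K1 \<union> K2) (R1 \<union> R2)) \<sigma> \<tau> =
        mmul C (wsum C \<beta> h (words_cover K1 R1)) (wsum C \<beta> h (words_cover K2 R2)) \<sigma> \<tau>"
    using LHS by (simp add: wsum_def W1_def W2_def W12_def F_def[abs_def])
qed

lemma mmul_supp:
  fixes A B :: "('v,'a) op"
  assumes C: "C = confs V S" and fC: "finite C"
    and hA: "\<forall>\<sigma>\<in>C. \<forall>\<tau>\<in>C. A \<sigma> \<tau> = (if (\<forall>x\<in>V - l. \<sigma> x = \<tau> x) then a (restrict \<sigma> l) (restrict \<tau> l) else 0)"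
    and hB: "\<forall>\<sigma>\<in>C. \<forall>\<tau>\<in>C. B \<sigma> \<tau> = (if (\<forall>x\<in>V - m. \<sigma> x = \<tau> x) then b (restrict \<sigma> m) (restrict \<tau> m) else 0)"
    and lV: "l \<subseteq> V" and mV: "m \<subseteq> V" and lm: "l \<inter> m = {}" and \<sigma>: "\<sigma> \<in> C" and \<tau>: "\<tau> \<in> C"
  shows "mmul C A B \<sigma> \<tau> = (if (\<forall>x\<in>V - (l \<union> m). \<sigma> x = \<tau> x)
            then a (restrict \<sigma> l) (restrict \<tau> l) * b (restrict \<sigma> m) (restrict \<tau> m) else 0)"
proof -
  define \<rho>1 where "\<rho>1 = (\<lambda>x. if x \<in> l then \<tau> x else \<sigma> x)"
  have \<sigma>E: "\<sigma> \<in> PiE V S" and \<tau>E: "\<tau> \<in> PiE V S" using \<sigma> \<tau> C by (auto simp: confs_def)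
  have r1: "\<rho>1 \<in> C"
    using \<sigma>E \<tau>E lV unfolding C confs_def \<rho>1_def by (auto simp: PiE_iff extensional_def)
  have zero: "A \<sigma> \<rho> * B \<rho> \<tau> = 0" if \<rho>: "\<rho> \<in> C" "\<rho> \<noteq> \<rho>1" for \<rho>
  proof (rule ccontr)
    assume nz: "A \<sigma> \<rho> * B \<rho> \<tau> \<noteq> 0"
    have c1: "\<forall>x\<in>V - l. \<sigma> x = \<rho> x"
      using nz hA \<sigma> \<rho>(1) by (metis mult_eq_0_iff)
    have c2: "\<forall>x\<in>V - m. \<rho> x = \<tau> x"
      using nz hB \<tau> \<rho>(1) by (metis mult_eq_0_iff)
    have \<rho>E: "\<rho> \<in> PiE V S" using \<rho> C by (simp add: confs_def)
    have "\<rho> = \<rho>1"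
    proof
      fix x show "\<rho> x = \<rho>1 x"
      proof (cases "x \<in> V")
        case True then show ?thesis using c1 c2 lm by (auto simp: \<rho>1_def)
      next
        case False
        then have "\<rho> x = undefined" "\<sigma> x = undefined" using \<rho>E \<sigma>E by (auto simp: PiE_iff extensional_def)
        then show ?thesis using False lV by (auto simp: \<rho>1_def)
      qed
    qed
    then show False using \<rho>(2) by simp
  qed
  have "mmul C A B \<sigma> \<tau> = (\<Sum>\<rho>\<in>C. if \<rho>1 = \<rho> then A \<sigma> \<rho>1 * B \<rho>1 \<tau> else 0)"
    unfolding mmul_def by (rule sum.cong) (use zero in auto)
  also have "\<dots> = A \<sigma> \<rho>1 * B \<rho>1 \<tau>" using fC r1 by (simp add: sum.delta)
  also have "A \<sigma> \<rho>1 = a (restrict \<sigma> l) (restrict \<tau> l)"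
  proof -
    have "restrict \<rho>1 l = restrict \<tau> l" by (auto simp: \<rho>1_def restrict_def)
    then show ?thesis using hA \<sigma> r1 by (simp add: \<rho>1_def)
  qed
  also have "B \<rho>1 \<tau> = (if (\<forall>x\<in>V - (l \<union> m). \<sigma> x = \<tau> x) then b (restrict \<sigma> m) (restrict \<tau> m) else 0)"
  proof -
    have "restrict \<rho>1 m = restrict \<sigma> m" using lm by (auto simp: \<rho>1_def restrict_def intro!: ext)
    moreover have "(\<forall>x\<in>V - m. \<rho>1 x = \<tau> x) \<longleftrightarrow> (\<forall>x\<in>V - (l \<union> m). \<sigma> x = \<tau> x)"
      by (auto simp: \<rho>1_def)
    ultimately show ?thesis using hB \<tau> r1 by simp
  qed
  finally show ?thesis by (simp add: restrict_def)
qed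

lemma supp_comm:
  assumes "supported_on V S l A" "supported_on V S m B" "l \<subseteq> V" "m \<subseteq> V" "l \<inter> m = {}"
    and "finite (confs V S)"
  shows "commC (confs V S) A B"
proof -
  obtain a where a: "\<forall>\<sigma>\<in>confs V S. \<forall>\<tau>\<in>confs V S.
          A \<sigma> \<tau> = (if (\<forall>x\<in>V - l. \<sigma> x = \<tau> x) then a (restrict \<sigma> l) (restrict \<tau> l) else 0)"
    using assms(1) unfolding supported_on_def by blast
  obtain b where b: "\<forall>\<sigma>\<in>confs V S. \<forall>\<tau>\<in>confs V S.
          B \<sigma> \<tau> = (if (\<forall>x\<in>V - m. \<sigma> x = \<tau> x) then b (restrict \<sigma> m) (restrict \<tau> m) else 0)"
    using assms(2) unfolding supported_on_def by blast
  show ?thesis unfolding commC_def ceq_def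
  proof (intro ballI)
    fix \<sigma> \<tau> assume s: "\<sigma> \<in> confs V S" and t: "\<tau> \<in> confs V S"
    have lm': "m \<inter> l = {}" using assms(5) by blast
    show "mmul (confs V S) A B \<sigma> \<tau> = mmul (confs V S) B A \<sigma> \<tau>"
      unfolding mmul_supp[OF refl assms(6) a b assms(3,4,5) s t] mmul_supp[OF refl assms(6) b a assms(4,3) lm' s t]
      by (simp add: Un_commute mult.commute)
  qed
qed

definition orel :: "'v set set \<Rightarrow> ('v set \<times> 'v set) set" where
  "orel K = {(a, b). a \<in> K \<and> b \<in> K \<and> overlap a b}"

lemma edge_connected_orel: "edge_connected K \<longleftrightarrow> (\<forall>l\<in>K. \<forall>m\<in>K. (l, m) \<in> (orel K)\<^sup>*)"
  by (simp add: edge_connected_def orel_def)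

lemma orel_mono: "K \<subseteq> U \<Longrightarrow> (p, q) \<in> (orel K)\<^sup>* \<Longrightarrow> (p, q) \<in> (orel U)\<^sup>*"
  by (rule rtrancl_mono[THEN subsetD, of "orel K"]) (auto simp: orel_def)

lemma orel_sym: "(p, q) \<in> (orel K)\<^sup>* \<Longrightarrow> (q, p) \<in> (orel K)\<^sup>*"
proof -
  assume "(p, q) \<in> (orel K)\<^sup>*"
  then have "(q, p) \<in> ((orel K)\<inverse>)\<^sup>*" by (rule rtrancl_converseI)
  moreover have "(orel K)\<inverse> = orel K" by (auto simp: orel_def overlap_def)
  ultimately show ?thesis by simp
qed

lemma comp_overlap_eq:
  assumes K: "K \<in> components G" and K': "K' \<in> components G" and x: "x \<in> K" and y: "y \<in> K'"
    and xy: "x \<inter> y \<noteq> {}"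
  shows "K = K'"
proof -
  define U where "U = K \<union> K'"
  have cK: "edge_connected K" "K \<subseteq> G" and cK': "edge_connected K'" "K' \<subseteq> G"
    using K K' by (auto simp: components_def)
  have xyU: "(x, y) \<in> (orel U)\<^sup>*" using x y xy by (auto simp: orel_def overlap_def U_def)
  have yxU: "(y, x) \<in> (orel U)\<^sup>*" using orel_sym[OF xyU] .
  have inK: "(p, q) \<in> (orel U)\<^sup>*" if "p \<in> K" "q \<in> K" for p q
    using cK(1) that by (intro orel_mono[of K U]) (auto simp: U_def edge_connected_orel)
  have inK': "(p, q) \<in> (orel U)\<^sup>*" if "p \<in> K'" "q \<in> K'" for p q
    using cK'(1) that by (intro orel_mono[of K' U]) (auto simp: U_def edge_connected_orel)
  have "edge_connected U"
    unfolding edge_connected_orel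
  proof (intro ballI)
    fix p q assume p: "p \<in> U" and q: "q \<in> U"
    show "(p, q) \<in> (orel U)\<^sup>*"
    proof (cases "p \<in> K")
      case pK: True
      show ?thesis
      proof (cases "q \<in> K")
        case True then show ?thesis using inK pK by blast
      next
        case False then have "q \<in> K'" using q by (simp add: U_def)
        then show ?thesis using inK[OF pK x] xyU inK'[OF y] by (meson rtrancl_trans)
      qed
    next
      case False then have pK': "p \<in> K'" using p by (simp add: U_def)
      show ?thesis
      proof (cases "q \<in> K'")
        case True then show ?thesis using inK' pK' by blast
      next
        case False then have "q \<in> K" using q by (simp add: U_def)
        then show ?thesis using inK'[OF pK' y] yxU inK[OF x] by (meson rtrancl_trans)
      qed
    qed
  qed
  moreover have "U \<subseteq> G" using cK cK' by (simp add: U_def)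
  moreover have mK: "\<And>K''. K \<subseteq> K'' \<Longrightarrow> K'' \<subseteq> G \<Longrightarrow> edge_connected K'' \<Longrightarrow> K'' = K"
    using K by (simp add: components_def)
  moreover have mK': "\<And>K''. K' \<subseteq> K'' \<Longrightarrow> K'' \<subseteq> G \<Longrightarrow> edge_connected K'' \<Longrightarrow> K'' = K'"
    using K' by (simp add: components_def)
  moreover have "K \<subseteq> U" "K' \<subseteq> U" by (auto simp: U_def)
  ultimately have "U = K" "U = K'" by metis+
  then show ?thesis by simp
qed

lemma comp_cover:
  assumes ne: "\<And>l. l \<in> G \<Longrightarrow> l \<noteq> {}" and l: "l \<in> G"
  shows "\<exists>K\<in>components G. l \<in> K"
proof -
  define K where "K = {m \<in> G. (l, m) \<in> (orel G)\<^sup>*}"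
  have lK: "l \<in> K" using l by (simp add: K_def)
  have KG: "K \<subseteq> G" by (auto simp: K_def)
  have path: "(l, q) \<in> (orel K)\<^sup>*" if "(l, q) \<in> (orel G)\<^sup>*" for q
    using that
  proof (induction rule: rtrancl_induct)
    case base then show ?case by simp
  next
    case (step y z)
    have "y \<in> K" "z \<in> K" using step by (auto simp: K_def orel_def intro: rtrancl_into_rtrancl)
    then have "(y, z) \<in> orel K" using step(2) by (auto simp: orel_def)
    then show ?case using step(3) by (rule rtrancl_into_rtrancl[rotated])
  qed
  have conn: "edge_connected K"
    unfolding edge_connected_orel
  proof (intro ballI)
    fix p q assume "p \<in> K" "q \<in> K"
    then have "(l, p) \<in> (orel K)\<^sup>*" "(l, q) \<in> (orel K)\<^sup>*" using path by (auto simp: K_def)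
    then show "(p, q) \<in> (orel K)\<^sup>*" by (meson orel_sym rtrancl_trans)
  qed
  have maxi: "K' = K" if "K \<subseteq> K'" "K' \<subseteq> G" "edge_connected K'" for K'
  proof
    show "K' \<subseteq> K"
    proof
      fix m assume m: "m \<in> K'"
      have "(l, m) \<in> (orel K')\<^sup>*" using that lK m by (auto simp: edge_connected_orel)
      then have "(l, m) \<in> (orel G)\<^sup>*" using orel_mono that(2) by blast
      then show "m \<in> K" using m that(2) by (auto simp: K_def)
    qed
  qed (use that in simp)
  have "K \<in> components G" unfolding components_def using lK KG conn maxi by blast
  then show ?thesis using lK by blast
qed

lemma union_components: "(\<And>l. l \<in> G \<Longrightarrow> l \<noteq> {}) \<Longrightarrow> \<Union>(components G) = G"
  using comp_cover[of G] by (auto simp: components_def)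

lemma wsum_list:
  assumes fC: "finite C" and fin: "\<And>K. K \<in> set Gs \<Longrightarrow> finite K" and B0: "0 \<le> B"
    and Bb: "\<And>l a b. l \<in> \<Union>(set Gs) \<Longrightarrow> a \<in> C \<Longrightarrow> b \<in> C \<Longrightarrow> norm (h l a b) \<le> B"
    and dist: "distinct Gs"
    and pw: "\<And>K K'. K \<in> set Gs \<Longrightarrow> K' \<in> set Gs \<Longrightarrow> K \<noteq> K' \<Longrightarrow>
              K \<inter> K' = {} \<and> (\<forall>x\<in>K. \<forall>y\<in>K'. commC C (h y) (h x))"
  shows "ceq C (wsum C \<beta> h (words_cover (\<Union>(set Gs)) (\<Union>(set Gs)))) (mprod_list C (map (eta C \<beta> h) Gs))"
  using fin Bb dist pw
proof (induction Gs)
  case Nil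
  have "{w. set w \<subseteq> {} \<and> {} \<subseteq> set w} = {[]}" by auto
  then show ?case unfolding ceq_def wsum_def words_cover_def by (simp add: fword_def mscale_def)
next
  case (Cons g Gs)
  have IH: "ceq C (wsum C \<beta> h (words_cover (\<Union>(set Gs)) (\<Union>(set Gs)))) (mprod_list C (map (eta C \<beta> h) Gs))"
  proof (rule Cons.IH)
    show "\<And>K. K \<in> set Gs \<Longrightarrow> finite K" using Cons.prems(1) by simp
    show "\<And>l a b. l \<in> \<Union>(set Gs) \<Longrightarrow> a \<in> C \<Longrightarrow> b \<in> C \<Longrightarrow> norm (h l a b) \<le> B"
      using Cons.prems(2) by simp
    show "distinct Gs" using Cons.prems(3) by simp
    show "\<And>K K'. K \<in> set Gs \<Longrightarrow> K' \<in> set Gs \<Longrightarrow> K \<noteq> K' \<Longrightarrow>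
              K \<inter> K' = {} \<and> (\<forall>x\<in>K. \<forall>y\<in>K'. commC C (h y) (h x))"
      by (rule Cons.prems(4)) simp_all
  qed
  have gn: "g \<notin> set Gs" using Cons.prems(3) by simp
  have pwg: "g \<inter> K' = {} \<and> (\<forall>x\<in>g. \<forall>y\<in>K'. commC C (h y) (h x))" if "K' \<in> set Gs" for K'
    by (rule Cons.prems(4)) (use gn that in auto)
  have split: "ceq C (wsum C \<beta> h (words_cover (g \<union> \<Union>(set Gs)) (g \<union> \<Union>(set Gs))))
        (mmul C (wsum C \<beta> h (words_cover g g)) (wsum C \<beta> h (words_cover (\<Union>(set Gs)) (\<Union>(set Gs)))))"
  proof (rule wsum_split[OF fC _ _ B0])
    show "finite g" "finite (\<Union>(set Gs))" using Cons.prems(1) by auto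
    show "\<And>l a b. l \<in> g \<union> \<Union>(set Gs) \<Longrightarrow> a \<in> C \<Longrightarrow> b \<in> C \<Longrightarrow> norm (h l a b) \<le> B"
      using Cons.prems(2) by simp
    show "g \<inter> \<Union>(set Gs) = {}" using pwg by blast
    show "\<And>x y. x \<in> g \<Longrightarrow> y \<in> \<Union>(set Gs) \<Longrightarrow> commC C (h y) (h x)"
      using pwg by blast
  qed auto
  have "ceq C (mmul C (wsum C \<beta> h (words_cover g g)) (wsum C \<beta> h (words_cover (\<Union>(set Gs)) (\<Union>(set Gs)))))
            (mprod_list C (map (eta C \<beta> h) (g # Gs)))"
    using IH by (simp add: eta_def mmul_cong ceq_refl)
  from ceq_trans[OF split this] show ?case by simp
qed

theorem lemma6:
  fixes V :: "'v set" and S :: "'v \<Rightarrow> 'a set" and E :: "'v set set"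
    and h :: "'v set \<Rightarrow> ('v, 'a) op" and \<beta> :: real
    and G :: "'v set set" and Gs :: "'v set set list"
  assumes "finite V"
    and "\<And>x. x \<in> V \<Longrightarrow> finite (S x) \<and> S x \<noteq> {}"
    and "finite E"
    and "\<And>l. l \<in> E \<Longrightarrow> l \<subseteq> V \<and> l \<noteq> {}"
    and "\<And>l. l \<in> E \<Longrightarrow> hermitian_op (confs V S) (h l)"
    and "\<And>l. l \<in> E \<Longrightarrow> supported_on V S l (h l)"
    and "G \<subseteq> E"
    and "distinct Gs" and "set Gs = components G"
  shows "\<forall>\<sigma>\<in>confs V S. \<forall>\<tau>\<in>confs V S.
           mmul (confs V S)
             (mexp (confs V S) (mscale (complex_of_real (-\<beta>)) (HK h (E - extension E G))))
             (mprod_list (confs V S) (map (eta (confs V S) \<beta> h) Gs)) \<sigma> \<tau>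
         = wsum (confs V S) \<beta> h (words_cover (E - boundary E G) G) \<sigma> \<tau>"
proof -
  define C where "C = confs V S"
  define K0 where "K0 = E - extension E G"
  have fC: "finite C" unfolding C_def confs_def
    using assms(1,2) by (intro finite_PiE) auto
  define B where "B = Max (insert 0 ((\<lambda>(l, a, b). norm (h l a b)) ` (E \<times> C \<times> C)))"
  have finB: "finite (insert 0 ((\<lambda>(l, a, b). norm (h l a b)) ` (E \<times> C \<times> C)))"
    using fC assms(3) by simp
  have B0: "0 \<le> B" unfolding B_def using finB by (intro Max_ge) auto
  have Bb: "norm (h l a b) \<le> B" if "l \<in> E" "a \<in> C" "b \<in> C" for l a b
    unfolding B_def using finB that by (intro Max_ge) (auto intro!: image_eqI[where x="(l, a, b)"])
  have comm: "commC C (h y) (h x)" if "x \<in> E" "y \<in> E" "x \<inter> y = {}" for x y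
    unfolding C_def
    by (rule supp_comm[OF assms(6)[OF that(2)] assms(6)[OF that(1)]]) (use assms(4) that fC C_def in auto)
  have Gext: "G \<subseteq> extension E G"
  proof
    fix x assume x: "x \<in> G"
    then have "x \<in> E" "x \<inter> x \<noteq> {}" using assms(4,7) by auto
    then show "x \<in> extension E G" using x by (auto simp: extension_def)
  qed
  have EB: "E - boundary E G = K0 \<union> G" using Gext assms(7) by (auto simp: boundary_def K0_def)
  have K0G: "K0 \<inter> G = {}" using Gext by (auto simp: K0_def)
  have K0E: "K0 \<subseteq> E" by (auto simp: K0_def)
  have split: "ceq C (wsum C \<beta> h (words_cover (K0 \<union> G) ({} \<union> G)))
        (mmul C (wsum C \<beta> h (words_cover K0 {})) (wsum C \<beta> h (words_cover G G)))"
  proof (rule wsum_split[OF fC _ _ B0])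
    show "finite K0" "finite G" using assms(3,7) K0E finite_subset by auto
    show "\<And>l a b. l \<in> K0 \<union> G \<Longrightarrow> a \<in> C \<Longrightarrow> b \<in> C \<Longrightarrow> norm (h l a b) \<le> B"
      using K0E assms(7) by (auto intro: Bb)
    show "K0 \<inter> G = {}" by (rule K0G)
    show "\<And>x y. x \<in> K0 \<Longrightarrow> y \<in> G \<Longrightarrow> commC C (h y) (h x)"
    proof -
      fix x y assume x: "x \<in> K0" and y: "y \<in> G"
      have d: "x \<inter> y = {}" using x y by (auto simp: K0_def extension_def)
      show "commC C (h y) (h x)" by (rule comm) (use x y d K0E assms(7) in auto)
    qed
  qed auto
  have e1: "ceq C (wsum C \<beta> h (words_cover K0 {})) (mexp C (mscale (complex_of_real (-\<beta>)) (HK h K0)))"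
    unfolding ceq_def
  proof (intro ballI)
    fix \<sigma> \<tau> assume "\<sigma> \<in> C" "\<tau> \<in> C"
    show "wsum C \<beta> h (words_cover K0 {}) \<sigma> \<tau> = mexp C (mscale (complex_of_real (-\<beta>)) (HK h K0)) \<sigma> \<tau>"
      by (rule wsum_exp[OF fC _ B0]) (use assms(3) K0E finite_subset Bb \<open>\<sigma> \<in> C\<close> in auto)
  qed
  have Gne: "\<And>l. l \<in> G \<Longrightarrow> l \<noteq> {}" using assms(4,7) by blast
  have UG: "\<Union>(set Gs) = G" using union_components[OF Gne] assms(9) by simp
  have e2: "ceq C (wsum C \<beta> h (words_cover (\<Union>(set Gs)) (\<Union>(set Gs)))) (mprod_list C (map (eta C \<beta> h) Gs))"
  proof (rule wsum_list[OF fC _ B0 _ assms(8)])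
    show "\<And>K. K \<in> set Gs \<Longrightarrow> finite K"
      using UG assms(3,7) by (meson Union_upper finite_subset)
    show "\<And>l a b. l \<in> \<Union>(set Gs) \<Longrightarrow> a \<in> C \<Longrightarrow> b \<in> C \<Longrightarrow> norm (h l a b) \<le> B"
      using UG assms(7) by (auto intro: Bb)
    fix K K' assume K: "K \<in> set Gs" and K': "K' \<in> set Gs" and ne: "K \<noteq> K'"
    have Kc: "K \<in> components G" and Kc': "K' \<in> components G" using K K' assms(9) by auto
    have ov: "x \<inter> y = {}" if "x \<in> K" "y \<in> K'" for x y
      using comp_overlap_eq[OF Kc Kc' that] ne by blast
    have KG: "K \<subseteq> G" "K' \<subseteq> G" using Kc Kc' by (auto simp: components_def)
    show "K \<inter> K' = {} \<and> (\<forall>x\<in>K. \<forall>y\<in>K'. commC C (h y) (h x))"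
    proof
      show "K \<inter> K' = {}"
      proof (rule ccontr)
        assume "K \<inter> K' \<noteq> {}"
        then obtain x where "x \<in> K" "x \<in> K'" by blast
        moreover have "x \<noteq> {}" using Gne KG \<open>x \<in> K\<close> by blast
        ultimately show False using ov[of x x] by simp
      qed
      show "\<forall>x\<in>K. \<forall>y\<in>K'. commC C (h y) (h x)"
        using ov KG assms(7) by (auto intro!: comm)
    qed
  qed
  have "ceq C (mmul C (mexp C (mscale (complex_of_real (-\<beta>)) (HK h K0))) (mprod_list C (map (eta C \<beta> h) Gs)))
              (mmul C (wsum C \<beta> h (words_cover K0 {})) (wsum C \<beta> h (words_cover G G)))"
    using mmul_cong[OF ceq_sym[OF e1] ceq_sym[OF e2]] UG by simp
  also have "ceq C \<dots> (wsum C \<beta> h (words_cover (K0 \<union> G) ({} \<union> G)))"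
    by (rule ceq_sym[OF split])
  finally show ?thesis unfolding ceq_def C_def K0_def EB[unfolded K0_def] by simp
qed

end
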